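(* Let $F$ be a Ferrers diagram of semiperimeter $n+1$, $T\in\mathsf{EWtab}(F)$ and $(a_1,\ldots,a_n)\in\mathbb{Z}^n$. Then $(T,(a_1,\ldots,a_n))$ is a decorated EW-tableau if and only if $(\Psi(T),(a_1,\ldots,a_n))$ is a (stable) decorated permutation.
   Context: Ferrers diagrams and graphs: a Ferrers diagram $F$ (English convention) of semiperimeter $n+1$ has rows and columns labeled by $0,\ldots,n$: the $n+1$ unit steps of its south-east boundary path, traversed from top-right to bottom-left, are labeled $0,\ldots,n$; a vertical step labels the row it bounds, a horizontal step the column it bounds (top row labeled $0$). $\mathsf{rows}(F)$, $\mathsf{cols}(F)$ are the label sets; $F$ has a cell in row $i$, column $j$ iff $i<j$. $G(F)$ has vertex set $\{0,\ldots,n\}$ with edges $\{i,j\}$ for $i\in\mathsf{rows}(F)$, $j\in\mathsf{cols}(F)$, $i<j$. Sandpile model on $G(F)$ with sink $0$: configurations $c\in\mathbb{N}^n$; non-sink $v$ unstable if $c_v\ge\deg(v)$; toppling sends one grain to each neighbour (grains to $0$ disappear); toppling the sink adds one grain to each neighbour of $0$. Canonical toppling of a recurrent configuration $c$: topple the sink ($U^{(0)}_c=\{0\}$), then alternately topple simultaneously all unstable vertices in $\mathsf{cols}(F)$ ($V^{(1)}_c$), all unstable in $\mathsf{rows}(F)$ ($U^{(1)}_c$), etc.; $\mathsf{CanonTop}(c)=(U^{(0)}_c,V^{(1)}_c,U^{(1)}_c,\ldots)$ is an ordered partition of $\{0,\ldots,n\}$. EW-tableaux: $0/1$-fillings $T$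 of $F$ with top row all 1s, a 0 in every other row, and no rectangle with 0s in two diagonally opposite corners and 1s in the other two; $\mathsf{EWtab}(F)$ is their set. $\phi_{TC}(T)$ is the (recurrent) configuration with $c_i$ = number of 1s in row $i$ ($i\in\mathsf{rows}(F)$), $c_i$ = number of 0s in column $i$ ($i\in\mathsf{cols}(F)$). $\mathsf{CanonTop}(T):=\mathsf{CanonTop}(\phi_{TC}(T))=(U^{(0)}_T,V^{(1)}_T,U^{(1)}_T,\ldots)$. $\Psi(T)$ is the word $\mathsf{inc}(V^{(1)}_T)\,\mathsf{dec}(U^{(1)}_T)\,\mathsf{inc}(V^{(2)}_T)\,\mathsf{dec}(U^{(2)}_T)\cdots$ (inc/dec = increasing/decreasing listing); it is a permutation of $[n]$ (this is the known bijection from $\mathsf{EWtab}(F)$ onto permutations of $[n]$ whose set of descent bottoms is $\mathsf{rows}(F)\setminus\{0\}$). A decorated EW-tableau is a pair $(T,(x_1,\ldots,x_n))$ with $T\in\mathsf{EWtab}(F)$, $0\le x_i<$ (number of 0s in row $i$ of $T$) for $i\in\mathsf{rows}(F)$, and $0\le x_i<$ (number of 1s in column $i$ of $T$) for $i\in\mathsf{cols}(F)$. Permutations: for a permutation $\pi=\pi_1\cdots\pi_n$ of $[n]$, the letter $\pi_i$ is an ascent top if $i=1$ or $\pi_{i-1}<\pi_i$, and a descent bottom if $\pi_{i-1}>\pi_i$. The run decomposition $\mathsf{RunDec}(\pi)=(D^{(0)}_\pi,A^{(1)}_\pi,D^{(1)}_\pi,A^{(2)}_\pi,\ldots)$ has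 $D^{(0)}_\pi=\{0\}$ followed by the sets of letters of the maximal factors of $\pi$ consisting alternately of ascent tops ($A$-blocks) and descent bottoms ($D$-blocks). A (stable) decorated permutation is a pair $(\pi,(a_1,\ldots,a_n))$ with $\pi$ a permutation of $[n]$ such that $0\le a_i<|\{j\in A^{(k)}_\pi: j>i,\ k\le\ell\}|$ if $i\in D^{(\ell)}_\pi$, and $0\le a_i<|\{j\in D^{(k)}_\pi: j<i,\ k<\ell\}|$ if $i\in A^{(\ell)}_\pi$ (here $a_i$ is attached to the letter $i$). *)

theory Defs
  imports Main
begin

text \<open>A Ferrers diagram of semiperimeter n+1 is encoded by n and the set R of row labels
  (labels of the vertical steps of the boundary path); the column labels are the remaining
  labels in {0..n}. The top row is labelled 0 (first step vertical) and, since every column is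
  nonempty, the last step n is horizontal.\<close>

definition ferrers :: "nat \<Rightarrow> nat set \<Rightarrow> bool" where
  "ferrers n R \<longleftrightarrow> R \<subseteq> {0..n} \<and> 0 \<in> R \<and> n \<notin> R"

definition fcols :: "nat \<Rightarrow> nat set \<Rightarrow> nat set" where
  "fcols n R = {0..n} - R"

definition fcell :: "nat \<Rightarrow> nat set \<Rightarrow> nat \<Rightarrow> nat \<Rightarrow> bool" where
  "fcell n R i j \<longleftrightarrow> i \<in> R \<and> j \<in> fcols n R \<and> i < j"

definition fadj :: "nat \<Rightarrow> nat set \<Rightarrow> nat \<Rightarrow> nat \<Rightarrow> bool" where
  "fadj n R u v \<longleftrightarrow> fcell n R u v \<or> fcell n R v u"

definition fdeg :: "nat \<Rightarrow> nat set \<Rightarrow> nat \<Rightarrow> nat" where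
  "fdeg n R v = card {u \<in> {0..n}. fadj n R v u}"

text \<open>Simultaneous toppling of a set S of vertices (the value at the sink 0 is irrelevant).\<close>
definition topple :: "nat \<Rightarrow> nat set \<Rightarrow> nat set \<Rightarrow> (nat \<Rightarrow> int) \<Rightarrow> (nat \<Rightarrow> int)" where
  "topple n R S c = (\<lambda>v. c v - (if v \<in> S then int (fdeg n R v) else 0)
                        + int (card {u \<in> S. fadj n R u v}))"

text \<open>Canonical toppling: step 0 topples the sink; step 2k-1 topples all unstable columns
  (block V^(k)), step 2k all unstable non-sink rows (block U^(k)).\<close>
fun canon_step :: "nat \<Rightarrow> nat set \<Rightarrow> (nat \<Rightarrow> int) \<Rightarrow> nat \<Rightarrow> nat set \<times> (nat \<Rightarrow> int)" where
  "canon_step n R c 0 = ({0}, topple n R {0} c)"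
| "canon_step n R c (Suc k) =
     (let c' = snd (canon_step n R c k);
          S = (if even k then {v \<in> fcols n R. c' v \<ge> int (fdeg n R v)}
               else {v \<in> R. v \<noteq> 0 \<and> c' v \<ge> int (fdeg n R v)})
      in (S, topple n R S c'))"

definition canon_block :: "nat \<Rightarrow> nat set \<Rightarrow> (nat \<Rightarrow> int) \<Rightarrow> nat \<Rightarrow> nat set" where
  "canon_block n R c k = fst (canon_step n R c k)"

definition V_blk :: "nat \<Rightarrow> nat set \<Rightarrow> (nat \<Rightarrow> int) \<Rightarrow> nat \<Rightarrow> nat set" where
  "V_blk n R c k = canon_block n R c (2 * k - 1)"

definition U_blk :: "nat \<Rightarrow> nat set \<Rightarrow> (nat \<Rightarrow> int) \<Rightarrow> nat \<Rightarrow> nat set" where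
  "U_blk n R c k = canon_block n R c (2 * k)"

text \<open>A 0/1 filling is a predicate T with T i j = True meaning a 1 in cell (i,j);
  T is False outside the cells of F.\<close>

definition EWtab :: "nat \<Rightarrow> nat set \<Rightarrow> (nat \<Rightarrow> nat \<Rightarrow> bool) set" where
  "EWtab n R = {T.
     (\<forall>i j. T i j \<longrightarrow> fcell n R i j) \<and>
     (\<forall>j. fcell n R 0 j \<longrightarrow> T 0 j) \<and>
     (\<forall>i \<in> R - {0}. \<exists>j. fcell n R i j \<and> \<not> T i j) \<and>
     (\<forall>i i' j j'. i < i' \<and> j < j' \<and> fcell n R i j \<and> fcell n R i j' \<and>
                  fcell n R i' j \<and> fcell n R i' j' \<longrightarrow>
        \<not> (\<not> T i j \<and> \<not> T i' j' \<and> T i j' \<and> T i' j) \<and>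
        \<not> (\<not> T i j' \<and> \<not> T i' j \<and> T i j \<and> T i' j'))}"

definition row_ones :: "nat \<Rightarrow> nat set \<Rightarrow> (nat \<Rightarrow> nat \<Rightarrow> bool) \<Rightarrow> nat \<Rightarrow> nat" where
  "row_ones n R T i = card {j. fcell n R i j \<and> T i j}"

definition row_zeros :: "nat \<Rightarrow> nat set \<Rightarrow> (nat \<Rightarrow> nat \<Rightarrow> bool) \<Rightarrow> nat \<Rightarrow> nat" where
  "row_zeros n R T i = card {j. fcell n R i j \<and> \<not> T i j}"

definition col_ones :: "nat \<Rightarrow> nat set \<Rightarrow> (nat \<Rightarrow> nat \<Rightarrow> bool) \<Rightarrow> nat \<Rightarrow> nat" where
  "col_ones n R T j = card {i. fcell n R i j \<and> T i j}"

definition col_zeros :: "nat \<Rightarrow> nat set \<Rightarrow> (nat \<Rightarrow> nat \<Rightarrow> bool) \<Rightarrow> nat \<Rightarrow> nat" where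
  "col_zeros n R T j = card {i. fcell n R i j \<and> \<not> T i j}"

text \<open>The configuration phi_TC(T) (value at the sink set to 0, irrelevant).\<close>
definition phiTC :: "nat \<Rightarrow> nat set \<Rightarrow> (nat \<Rightarrow> nat \<Rightarrow> bool) \<Rightarrow> (nat \<Rightarrow> int)" where
  "phiTC n R T = (\<lambda>v. if v \<in> R - {0} then int (row_ones n R T v)
                      else if v \<in> fcols n R then int (col_zeros n R T v) else 0)"

text \<open>Psi(T) = inc(V1) dec(U1) inc(V2) dec(U2) ... (at most n nonempty pairs).\<close>
definition Psi :: "nat \<Rightarrow> nat set \<Rightarrow> (nat \<Rightarrow> nat \<Rightarrow> bool) \<Rightarrow> nat list" where
  "Psi n R T = concat (map (\<lambda>k. sorted_list_of_set (V_blk n R (phiTC n R T) k)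
                                @ rev (sorted_list_of_set (U_blk n R (phiTC n R T) k)))
                          [1..<n+1])"

definition decorated_EW :: "nat \<Rightarrow> nat set \<Rightarrow> (nat \<Rightarrow> nat \<Rightarrow> bool) \<Rightarrow> (nat \<Rightarrow> int) \<Rightarrow> bool" where
  "decorated_EW n R T x \<longleftrightarrow> T \<in> EWtab n R \<and>
     (\<forall>i \<in> R - {0}. 0 \<le> x i \<and> x i < int (row_zeros n R T i)) \<and>
     (\<forall>j \<in> fcols n R. 0 \<le> x j \<and> x j < int (col_ones n R T j))"

definition is_perm :: "nat \<Rightarrow> nat list \<Rightarrow> bool" where
  "is_perm n \<pi> \<longleftrightarrow> distinct \<pi> \<and> set \<pi> = {1..n}"

definition asc_top :: "nat list \<Rightarrow> nat \<Rightarrow> bool" where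
  "asc_top \<pi> p \<longleftrightarrow> p = 0 \<or> \<pi> ! (p - 1) < \<pi> ! p"

definition run_start :: "nat list \<Rightarrow> nat \<Rightarrow> bool" where
  "run_start \<pi> q \<longleftrightarrow> q = 0 \<or> asc_top \<pi> q \<noteq> asc_top \<pi> (q - 1)"

text \<open>Index of the maximal factor containing position p among factors of the same kind.\<close>
definition run_index :: "nat list \<Rightarrow> nat \<Rightarrow> nat" where
  "run_index \<pi> p = card {q. q \<le> p \<and> run_start \<pi> q \<and> asc_top \<pi> q = asc_top \<pi> p}"

definition A_run :: "nat list \<Rightarrow> nat \<Rightarrow> nat set" where
  "A_run \<pi> l = {\<pi> ! p | p. p < length \<pi> \<and> asc_top \<pi> p \<and> run_index \<pi> p = l}"

definition D_run :: "nat list \<Rightarrow> nat \<Rightarrow> nat set" where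
  "D_run \<pi> l = (if l = 0 then {0}
                 else {\<pi> ! p | p. p < length \<pi> \<and> \<not> asc_top \<pi> p \<and> run_index \<pi> p = l})"

definition decorated_perm :: "nat \<Rightarrow> nat list \<Rightarrow> (nat \<Rightarrow> int) \<Rightarrow> bool" where
  "decorated_perm n \<pi> a \<longleftrightarrow> is_perm n \<pi> \<and>
     (\<forall>i \<in> {1..n}. \<forall>l.
        (i \<in> D_run \<pi> l \<longrightarrow>
           0 \<le> a i \<and> a i < int (card {j. \<exists>k \<le> l. j \<in> A_run \<pi> k \<and> j > i})) \<and>
        (i \<in> A_run \<pi> l \<longrightarrow>
           0 \<le> a i \<and> a i < int (card {j. \<exists>k < l. j \<in> D_run \<pi> k \<and> j < i})))"

end

theory Submission
  imports Defs
begin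


locale EW =
  fixes n :: nat and R :: "nat set" and T :: "nat \<Rightarrow> nat \<Rightarrow> bool"
  assumes fer: "ferrers n R" and ew: "T \<in> EWtab n R"
begin

lemma R_sub: "R \<subseteq> {0..n}" and zero_R: "0 \<in> R" and n_notR: "n \<notin> R"
  using fer by (auto simp: ferrers_def)

lemma fcell_iff: "fcell n R i j \<longleftrightarrow> i \<in> R \<and> j \<le> n \<and> j \<notin> R \<and> i < j"
  by (auto simp: fcell_def fcols_def)

lemma T_cell: "T i j \<Longrightarrow> fcell n R i j"
  using ew by (auto simp: EWtab_def)

lemma T_top: "fcell n R 0 j \<Longrightarrow> T 0 j"
  using ew by (auto simp: EWtab_def)

lemma T_zero: "i \<in> R \<Longrightarrow> i \<noteq> 0 \<Longrightarrow> \<exists>j. fcell n R i j \<and> \<not> T i j"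
  using ew by (auto simp: EWtab_def)

lemma T_sq: "i < i' \<Longrightarrow> j < j' \<Longrightarrow> fcell n R i j \<Longrightarrow> fcell n R i j' \<Longrightarrow>
   fcell n R i' j \<Longrightarrow> fcell n R i' j' \<Longrightarrow>
   \<not> (\<not> T i j \<and> \<not> T i' j' \<and> T i j' \<and> T i' j) \<and> \<not> (\<not> T i j' \<and> \<not> T i' j \<and> T i j \<and> T i' j')"
  using ew unfolding EWtab_def by blast

lemma no4: assumes "r < p" "fcell n R r x" "fcell n R p x" "fcell n R p y" "fcell n R r y"
  "T r x" "\<not> T p x" "T p y" "\<not> T r y" shows False
proof (cases "x < y")
  case True
  then show ?thesis using T_sq[of r p x y] assms by blast
next
  case False
  then have "y < x" using assms by (cases "x = y") auto
  then show ?thesis using T_sq[of r p y x] assms by blast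
qed

definition edge :: "nat \<Rightarrow> nat \<Rightarrow> bool" where
  "edge u v \<longleftrightarrow> (fcell n R u v \<and> T u v) \<or> (fcell n R v u \<and> \<not> T v u)"

lemma edge_V: "edge u v \<Longrightarrow> u \<le> n \<and> v \<le> n"
  using R_sub by (auto simp: edge_def fcell_iff)

lemma edge_to_col: "v \<notin> R \<Longrightarrow> edge u v \<longleftrightarrow> fcell n R u v \<and> T u v"
  by (auto simp: edge_def fcell_iff)

lemma edge_to_row: "v \<in> R \<Longrightarrow> edge u v \<longleftrightarrow> fcell n R v u \<and> \<not> T v u"
  by (auto simp: edge_def fcell_iff)

lemma edge_asym: "edge u v \<Longrightarrow> \<not> edge v u"
  by (auto simp: edge_def fcell_iff)

lemma noStall_aux:
  "finite W \<Longrightarrow> W \<subseteq> {0..n} \<Longrightarrow> W \<noteq> {} \<Longrightarrow> \<exists>w\<in>W. \<forall>u\<in>W. \<not> edge u w"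
proof (induction "card W" arbitrary: W rule: less_induct)
  case less
  show ?case
  proof (rule ccontr)
    assume "\<not> ?thesis"
    then have pred: "\<And>w. w \<in> W \<Longrightarrow> \<exists>u\<in>W. edge u w" by blast
    obtain w0 where w0: "w0 \<in> W" using less by blast
    have "\<exists>r\<in>W. r \<in> R"
    proof (cases "w0 \<in> R")
      case True then show ?thesis using w0 by blast
    next
      case False
      obtain u where u: "u \<in> W" "edge u w0" using pred w0 by blast
      show ?thesis
      proof (cases "u \<in> R")
        case True then show ?thesis using u by blast
      next
        case False
        obtain u' where u': "u' \<in> W" "edge u' u" using pred u by blast
        then have "u' \<in> R" using False by (auto simp: edge_to_col fcell_iff)
        then show ?thesis using u' by blast
      qed
    qed
    then have ne: "W \<inter> R \<noteq> {}" by blast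
    define p where "p = Max (W \<inter> R)"
    have fin: "finite (W \<inter> R)" using less by auto
    have pW: "p \<in> W" "p \<in> R" using Max_in[OF fin ne] p_def by auto
    have pmax: "\<And>r. r \<in> W \<Longrightarrow> r \<in> R \<Longrightarrow> r \<le> p" using Max_ge[OF fin] p_def by auto
    obtain ca where ca: "ca \<in> W" "edge ca p" using pred pW by blast
    then have ca2: "fcell n R p ca" "\<not> T p ca" using pW by (auto simp: edge_to_row)
    obtain r where r: "r \<in> W" "edge r ca" using pred ca by blast
    have caR: "ca \<notin> R" using ca2 by (auto simp: fcell_iff)
    then have r2: "fcell n R r ca" "T r ca" using r by (auto simp: edge_to_col)
    have rR: "r \<in> R" using r2 by (auto simp: fcell_iff)
    have rp: "r < p" using pmax[OF r(1) rR] r2 ca2 by (cases "r = p") auto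
    let ?W = "W - {p}"
    have "card ?W < card W" using card_Diff1_less[OF less(2) pW(1)] .

    moreover have "?W \<noteq> {}" using ca caR pW by auto
    ultimately obtain w where w: "w \<in> ?W" "\<forall>u\<in>?W. \<not> edge u w"
      using less(1)[of ?W] less(2,3) by auto
    obtain u where u: "u \<in> W" "edge u w" using pred w(1) by blast
    have up: "u = p" using u w by auto
    have wR: "w \<notin> R" using u up pW by (auto simp: edge_def fcell_iff)
    have pw: "fcell n R p w" "T p w" using u up wR by (auto simp: edge_to_col)
    have rw: "fcell n R r w" using pw rR rp by (auto simp: fcell_iff)
    have "\<not> T r w" using w rw r rp edge_to_col[OF wR] by auto
    then show False using no4[of r p ca w] rp r2 ca2 pw rw by blast
  qed
qed

lemma noStall: "W \<subseteq> {0..n} \<Longrightarrow> W \<noteq> {} \<Longrightarrow> \<exists>w\<in>W. \<forall>u\<in>W. \<not> edge u w"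
  using noStall_aux finite_subset by blast

fun Dset :: "nat \<Rightarrow> nat set" where
  "Dset 0 = {0}"
| "Dset (Suc s) = Dset s \<union> {v \<in> (if even s then fcols n R else R - {0}). v \<notin> Dset s \<and> (\<forall>u. edge u v \<longrightarrow> u \<in> Dset s)}"

lemma Dset_sub: "Dset s \<subseteq> {0..n}"
  by (induction s) (use R_sub in \<open>auto simp: fcols_def\<close>)

lemma zero_Dset: "0 \<in> Dset s"
  by (induction s) auto

lemma Dset_mono: "s \<le> s' \<Longrightarrow> Dset s \<subseteq> Dset s'"
  by (induction s' rule: dec_induct) auto

lemma no_edge_0: "\<not> edge u 0"
  using T_top zero_R by (auto simp: edge_to_row)

lemma downset: "v \<in> Dset s \<Longrightarrow> edge u v \<Longrightarrow> u \<in> Dset s"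
  by (induction s) (auto simp: no_edge_0)

lemma step2: assumes "v \<le> n" "v \<noteq> 0" "\<forall>u. edge u v \<longrightarrow> u \<in> Dset s"
  shows "v \<in> Dset (Suc (Suc s))"
proof -
  have p1: "\<forall>u. edge u v \<longrightarrow> u \<in> Dset (Suc s)" using assms(3) Dset_mono[of s "Suc s"] by auto
  show ?thesis
  proof (cases "v \<in> R")
    case True
    show ?thesis
    proof (cases "odd s")
      case True
      then have "v \<in> Dset (Suc s)" using assms \<open>v \<in> R\<close> by auto
      then show ?thesis by simp
    next
      case False
      then show ?thesis using assms \<open>v \<in> R\<close> p1 by auto
    qed
  next
    case False
    have vc: "v \<in> fcols n R" using False assms by (auto simp: fcols_def)
    show ?thesis
    proof (cases "even s")
      case True
      then have "v \<in> Dset (Suc s)" using assms vc by auto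
      then show ?thesis by simp
    next
      case False
      then show ?thesis using assms vc p1 by auto
    qed
  qed
qed

lemma grow: assumes "Dset s \<noteq> {0..n}" shows "card (Dset s) < card (Dset (Suc (Suc s)))"
proof -
  let ?W = "{0..n} - Dset s"
  have "?W \<noteq> {}" using assms Dset_sub by blast
  moreover have "?W \<subseteq> {0..n}" by blast
  ultimately have "\<exists>w\<in>?W. \<forall>u\<in>?W. \<not> edge u w" using noStall by blast
  then obtain w where w: "w \<in> ?W" "\<forall>u\<in>?W. \<not> edge u w" by blast
  have "\<forall>u. edge u w \<longrightarrow> u \<in> Dset s"
  proof (intro allI impI)
    fix u assume e: "edge u w"
    then have "u \<le> n" using edge_V by blast
    then show "u \<in> Dset s" using w(2) e by auto
  qed
  moreover have "w \<noteq> 0" using w(1) zero_Dset[of s] by (metis DiffD2)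
  moreover have "w \<le> n" using w(1) by simp
  ultimately have "w \<in> Dset (Suc (Suc s))" using step2[of w s] by blast
  moreover have "Dset s \<subseteq> Dset (Suc (Suc s))" by (rule Dset_mono) simp
  ultimately have "Dset s \<subset> Dset (Suc (Suc s))" using w by blast
  then show ?thesis by (meson Dset_sub finite_atLeastAtMost finite_subset psubset_card_mono)
qed

lemma card_grow: "min (k+1) (n+1) \<le> card (Dset (2*k))"
proof (induction k)
  case 0 then show ?case by simp
next
  case (Suc k)
  show ?case
  proof (cases "Dset (2*k) = {0..n}")
    case True
    then have "Dset (2*k) \<subseteq> Dset (2 * Suc k)" by (intro Dset_mono) simp
    then have "Dset (2 * Suc k) = {0..n}" using True Dset_sub by blast
    then show ?thesis by simp
  next
    case False
    have e: "2 * Suc k = Suc (Suc (2*k))" by simp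
    have "card (Dset (2*k)) < card (Dset (2 * Suc k))" unfolding e by (rule grow[OF False])
    then show ?thesis using Suc.IH by linarith
  qed
qed

lemma Dset_all: "Dset (2*n) = {0..n}"
proof -
  have "n + 1 \<le> card (Dset (2*n))" using card_grow[of n] by simp
  moreover have "card (Dset (2*n)) \<le> card {0..n}" using Dset_sub by (intro card_mono) auto
  ultimately have "card (Dset (2*n)) = card {0..n}" by simp
  then show ?thesis using Dset_sub card_subset_eq[of "{0..n}" "Dset (2*n)"] by simp
qed

definition t :: "nat \<Rightarrow> nat" where "t v = (LEAST s. v \<in> Dset s)"

lemma t_in: "v \<le> n \<Longrightarrow> v \<in> Dset (t v)"
  unfolding t_def using Dset_all by (metis LeastI atLeastAtMost_iff le0)

lemma t_le: "v \<in> Dset s \<Longrightarrow> t v \<le> s"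
  unfolding t_def by (rule Least_le)

lemma t_bound: "v \<le> n \<Longrightarrow> t v \<le> 2*n"
  using t_le Dset_all by auto

lemma in_Dset_iff: "v \<le> n \<Longrightarrow> v \<in> Dset s \<longleftrightarrow> t v \<le> s"
  using t_in t_le Dset_mono by blast

lemma t_0: "t 0 = 0"
  using t_le[of 0 0] by simp

lemma t_pos: "v \<noteq> 0 \<Longrightarrow> v \<le> n \<Longrightarrow> 0 < t v"
  using t_in[of v] by (cases "t v") auto

lemma t_Suc: assumes "v \<le> n" "t v = Suc s"
  shows "v \<in> (if even s then fcols n R else R - {0})" "\<forall>u. edge u v \<longrightarrow> u \<in> Dset s"
proof -
  have "v \<in> Dset (Suc s)" by (metis assms t_in)
  moreover have "v \<notin> Dset s" using in_Dset_iff assms by simp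
  ultimately show "v \<in> (if even s then fcols n R else R - {0})" "\<forall>u. edge u v \<longrightarrow> u \<in> Dset s"
    by auto
qed

lemma parity: assumes "v \<le> n" "v \<noteq> 0" shows "v \<notin> R \<longleftrightarrow> odd (t v)"
proof -
  obtain s where s: "t v = Suc s" using t_pos assms by (metis gr0_implies_Suc)
  show ?thesis using t_Suc(1)[OF assms(1) s] s by (auto simp: fcols_def split: if_splits)
qed

lemma edge_t: assumes "edge u v" shows "t u < t v"
proof -
  have v: "v \<le> n" "u \<le> n" using edge_V assms by auto
  have "v \<noteq> 0"
  proof
    assume "v = 0" then show False using assms no_edge_0 by simp
  qed
  then obtain s where s: "t v = Suc s" using t_pos v by (metis gr0_implies_Suc)
  then have "u \<in> Dset s" using t_Suc(2)[OF v(1) s] assms by auto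
  then show ?thesis using t_le s by fastforce
qed

lemma has_pred: assumes "v \<le> n" "v \<noteq> 0" shows "\<exists>u. edge u v"
proof (cases "v \<in> R")
  case True
  then obtain j where "fcell n R v j" "\<not> T v j" using T_zero assms by blast
  then show ?thesis using True edge_to_row by blast
next
  case False
  then have "fcell n R 0 v" using zero_R assms by (auto simp: fcell_iff)
  then show ?thesis using T_top False edge_to_col by blast
qed

lemma pred_prev: assumes "v \<le> n" "v \<noteq> 0" shows "\<exists>u. edge u v \<and> t u = t v - 1"
proof (rule ccontr)
  assume H: "\<not> ?thesis"
  obtain s where s: "t v = Suc s" using t_pos assms by (metis gr0_implies_Suc)
  have lt: "\<And>u. edge u v \<Longrightarrow> t u < s" using H s edge_t by fastforce
  obtain u0 where u0: "edge u0 v" using has_pred assms by blast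
  have par: "\<And>u. edge u v \<Longrightarrow> odd (t u) \<longleftrightarrow> odd s"
  proof -
    fix u assume e: "edge u v"
    have u: "u \<le> n" using edge_V e by auto
    show "odd (t u) \<longleftrightarrow> odd s"
    proof (cases "u = 0")
      case True
      then have "v \<notin> R" using e no_edge_0 edge_to_row zero_R T_top by (auto simp: fcell_iff)
      then have "odd (t v)" using parity assms by auto
      then show ?thesis using True t_0 s by simp
    next
      case False
      have "u \<in> R \<longleftrightarrow> v \<notin> R" using e by (auto simp: edge_def fcell_iff)
      then show ?thesis using parity[OF u False] parity[OF assms] s by auto
    qed
  qed
  have "s \<ge> 2"
  proof -
    have "t u0 < s" using lt u0 .
    moreover have "odd (t u0) \<longleftrightarrow> odd s" using par u0 .
    ultimately show ?thesis
    proof -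
      assume a: "t u0 < s" "odd (t u0) \<longleftrightarrow> odd s"
      show ?thesis
      proof (rule ccontr)
        assume "\<not> 2 \<le> s"
        then have "s = 0 \<or> s = 1" by auto
        then show False using a by auto
      qed
    qed
  qed
  then obtain s' where s': "s = Suc (Suc s')" by (metis add_2_eq_Suc le_Suc_ex)
  have "\<forall>u. edge u v \<longrightarrow> u \<in> Dset s'"
  proof (intro allI impI)
    fix u assume e: "edge u v"
    have "t u < s" "odd (t u) \<longleftrightarrow> odd s" using lt par e by auto
    moreover have "t u \<noteq> Suc s'" using \<open>odd (t u) \<longleftrightarrow> odd s\<close> s' by auto
    ultimately have "t u \<le> s'" using s' by linarith
    then show "u \<in> Dset s'" using in_Dset_iff edge_V e by auto
  qed
  then have "v \<in> Dset (Suc (Suc s'))" using step2 assms by blast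
  then show False using t_le s s' by fastforce
qed

definition Lb :: "nat \<Rightarrow> nat set" where "Lb s = {v. v \<le> n \<and> t v = s}"

lemma t_eq0: "v \<le> n \<Longrightarrow> t v = 0 \<longleftrightarrow> v = 0"
  by (metis t_0 t_pos less_not_refl)

lemma Lb_0: "Lb 0 = {0}"
  using t_eq0 by (auto simp: Lb_def)

lemma Lb_nonempty_prev: "Lb (Suc s) \<noteq> {} \<Longrightarrow> Lb s \<noteq> {}"
proof -
  assume "Lb (Suc s) \<noteq> {}"
  then obtain v where v: "v \<le> n" "t v = Suc s" by (auto simp: Lb_def)
  then have "v \<noteq> 0" by (metis Zero_not_Suc t_0)
  then obtain u where "edge u v" "t u = t v - 1" using pred_prev v by blast
  then have "edge u v" "t u = s" using v by auto
  then show "Lb s \<noteq> {}" using edge_V by (auto simp: Lb_def)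
qed


declare Dset.simps(2)[simp del]

lemma Lb_Suc: "Lb (Suc s) = Dset (Suc s) - Dset s"
proof (rule set_eqI)
  fix v show "v \<in> Lb (Suc s) \<longleftrightarrow> v \<in> Dset (Suc s) - Dset s"
  proof (cases "v \<le> n")
    case True
    then show ?thesis using in_Dset_iff[OF True, of s] in_Dset_iff[OF True, of "Suc s"]
      by (auto simp: Lb_def)
  next
    case False
    then show ?thesis using Dset_sub[of "Suc s"] by (auto simp: Lb_def)
  qed
qed

lemma fadj_sym: "fadj n R u v \<longleftrightarrow> fadj n R v u"
  by (auto simp: fadj_def)

lemma fadj_edge: "fadj n R u v \<longleftrightarrow> edge u v \<or> edge v u"
  by (auto simp: fadj_def edge_def)

lemma fadj_V: "fadj n R u v \<Longrightarrow> u \<le> n"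
  using R_sub by (auto simp: fadj_def fcell_iff)

definition Aset :: "nat \<Rightarrow> nat set" where "Aset v = {u. fadj n R u v}"
definition Pset :: "nat \<Rightarrow> nat set" where "Pset v = {u. edge u v}"

lemma finA: "finite (Aset v)"
  by (rule finite_subset[of _ "{0..n}"]) (auto simp: Aset_def dest: fadj_V)

lemma fdeg_eq: "fdeg n R v = card (Aset v)"
  unfolding fdeg_def Aset_def using fadj_V fadj_sym by (metis (mono_tags, lifting) atLeastAtMost_iff le0 Collect_cong)

lemma P_sub_A: "Pset v \<subseteq> Aset v"
  by (auto simp: Pset_def Aset_def fadj_edge)

lemma P_ne: "v \<le> n \<Longrightarrow> v \<noteq> 0 \<Longrightarrow> Pset v \<noteq> {}"
  using has_pred by (auto simp: Pset_def)

lemma phi_eq: assumes "v \<le> n" "v \<noteq> 0" shows "phiTC n R T v = int (card (Aset v - Pset v))"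
proof (cases "v \<in> R")
  case True
  have "Aset v - Pset v = {j. fcell n R v j \<and> T v j}"
    using True by (auto simp: Aset_def Pset_def edge_to_row fadj_def fcell_iff)
  then show ?thesis using True assms by (simp add: phiTC_def row_ones_def)
next
  case False
  have "Aset v - Pset v = {i. fcell n R i v \<and> \<not> T i v}"
    using False by (auto simp: Aset_def Pset_def edge_to_col fadj_def fcell_iff)
  then show ?thesis using False assms by (simp add: phiTC_def col_zeros_def fcols_def)
qed

lemma key_arith:
  assumes "finite A" "P \<subseteq> A" "P \<noteq> {}" "\<not> b \<Longrightarrow> X \<subseteq> P" "X \<subseteq> A"
  shows "(int (card A) \<le> int (card (A - P)) - (if b then int (card A) else 0) + int (card X))
     \<longleftrightarrow> (\<not> b \<and> P \<subseteq> X)"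
proof -
  have fP: "finite P" using assms finite_subset by blast
  have cA: "card A = card (A - P) + card P" using assms
    by (metis card_Diff_subset card_mono diff_add_inverse2 le_add_diff_inverse2 fP)
  have cP: "card P > 0" using fP assms(3) by auto
  have cX: "card X \<le> card A" using assms card_mono by blast
  show ?thesis
  proof (cases b)
    case True then show ?thesis using cA cP cX by auto
  next
    case False
    then have XP: "X \<subseteq> P" using assms by blast
    have "card P \<le> card X \<longleftrightarrow> P \<subseteq> X"
      using XP fP card_seteq card_mono finite_subset by (metis subset_antisym)
    then show ?thesis using False cA by auto
  qed
qed

definition conf :: "nat \<Rightarrow> nat \<Rightarrow> int" where
  "conf s v = phiTC n R T v - (if v \<in> Dset s then int (fdeg n R v) else 0)
      + int (card {u \<in> Dset s. fadj n R u v})"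

lemma unstable_iff: assumes "v \<le> n" "v \<noteq> 0"
  shows "int (fdeg n R v) \<le> conf s v \<longleftrightarrow> v \<notin> Dset s \<and> (\<forall>u. edge u v \<longrightarrow> u \<in> Dset s)"
proof -
  let ?X = "{u \<in> Dset s. fadj n R u v}"
  have X: "?X = Dset s \<inter> Aset v" by (auto simp: Aset_def)
  have sub: "v \<notin> Dset s \<Longrightarrow> ?X \<subseteq> Pset v"
  proof
    fix u assume nv: "v \<notin> Dset s" and u: "u \<in> ?X"
    then have "edge u v \<or> edge v u" using fadj_edge by auto
    moreover have "\<not> edge v u" using downset u nv by blast
    ultimately show "u \<in> Pset v" by (auto simp: Pset_def)
  qed
  have "int (fdeg n R v) \<le> conf s v \<longleftrightarrow> (v \<notin> Dset s \<and> Pset v \<subseteq> ?X)"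
    unfolding conf_def fdeg_eq phi_eq[OF assms]
    by (rule key_arith[OF finA P_sub_A P_ne[OF assms] sub]) (auto simp: Aset_def)
  also have "\<dots> \<longleftrightarrow> v \<notin> Dset s \<and> (\<forall>u. edge u v \<longrightarrow> u \<in> Dset s)"
    using P_sub_A by (auto simp: Pset_def Aset_def)
  finally show ?thesis .
qed

lemma canon_eq: "canon_step n R (phiTC n R T) s = (Lb s, conf s)"
proof (induction s)
  case 0
  show ?case by (auto simp: Lb_0 conf_def topple_def fun_eq_iff)
next
  case (Suc s)
  let ?typ = "(if even s then fcols n R else R - {0})"
  let ?S = "(if even s then {v \<in> fcols n R. conf s v \<ge> int (fdeg n R v)}
               else {v \<in> R. v \<noteq> 0 \<and> conf s v \<ge> int (fdeg n R v)})"
  have tyv: "\<And>v. v \<in> ?typ \<Longrightarrow> v \<le> n \<and> v \<noteq> 0"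
  proof -
    fix v assume a: "v \<in> ?typ"
    show "v \<le> n \<and> v \<noteq> 0"
    proof (cases "even s")
      case True
      then have "v \<in> {0..n}" "v \<notin> R" using a by (auto simp: fcols_def)
      then show ?thesis using zero_R by (metis atLeastAtMost_iff)
    next
      case False
      then have "v \<in> R" "v \<noteq> 0" using a by auto
      then show ?thesis using R_sub by auto
    qed
  qed
  have S: "?S = Lb (Suc s)"
  proof -
    have "?S = {v \<in> ?typ. conf s v \<ge> int (fdeg n R v)}" by auto
    also have "\<dots> = {v \<in> ?typ. v \<notin> Dset s \<and> (\<forall>u. edge u v \<longrightarrow> u \<in> Dset s)}"
      using unstable_iff tyv by blast
    also have "\<dots> = Lb (Suc s)" unfolding Lb_Suc by (auto simp: Dset.simps)
    finally show ?thesis .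
  qed
  have disj: "Dset s \<inter> Lb (Suc s) = {}" unfolding Lb_Suc by auto
  have DS: "Dset (Suc s) = Dset s \<union> Lb (Suc s)" unfolding Lb_Suc using Dset_mono[of s "Suc s"] by auto
  have finD: "finite (Dset x)" for x using Dset_sub finite_subset by blast
  have top: "topple n R (Lb (Suc s)) (conf s) = conf (Suc s)"
  proof
    fix v
    have "{u \<in> Dset (Suc s). fadj n R u v} = {u \<in> Dset s. fadj n R u v} \<union> {u \<in> Lb (Suc s). fadj n R u v}"
      using DS by auto
    moreover have "card ({u \<in> Dset s. fadj n R u v} \<union> {u \<in> Lb (Suc s). fadj n R u v})
        = card {u \<in> Dset s. fadj n R u v} + card {u \<in> Lb (Suc s). fadj n R u v}"
      by (rule card_Un_disjoint) (use disj finD[of s] finD[of "Suc s"] DS in auto)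
    ultimately show "topple n R (Lb (Suc s)) (conf s) v = conf (Suc s) v"
      unfolding topple_def conf_def using DS disj by auto
  qed
  show ?case using Suc S top by (simp add: Let_def)
qed

lemma canon_block_eq: "canon_block n R (phiTC n R T) s = Lb s"
  by (simp add: canon_block_def canon_eq)


end


lemma sorted_hd_last: "sorted xs \<Longrightarrow> x \<in> set xs \<Longrightarrow> hd xs \<le> x \<and> x \<le> last xs"
  for xs :: "nat list"
  by (induction xs) (auto simp: order_trans)

lemma concat_pairs: "concat (map (\<lambda>k. f (2*k-1) @ f (2*k)) [1..<m+1]) = concat (map f [1..<2*m+1])"
  by (induction m) (auto simp: mult_2)

lemma ar1: "even x \<Longrightarrow> Suc ((x+1) div 2) = (Suc x + 1) div 2" for x :: nat by presburger
lemma ar2: "odd x \<Longrightarrow> Suc (x div 2) = Suc x div 2" for x :: nat by presburger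
lemma ar3: "odd x \<Longrightarrow> (x+1) div 2 = (Suc x + 1) div 2" for x :: nat by presburger
lemma ar4: "even x \<Longrightarrow> x div 2 = Suc x div 2" for x :: nat by presburger

lemma count_runs:
  fixes \<tau> :: "nat \<Rightarrow> nat"
  assumes "\<tau> 0 = 1" "\<And>q. 0 < q \<Longrightarrow> q \<le> p \<Longrightarrow> \<tau> q = \<tau> (q-1) \<or> \<tau> q = Suc (\<tau> (q-1))"
  shows "card {q. q \<le> p \<and> (q = 0 \<or> \<tau> q \<noteq> \<tau> (q-1)) \<and> odd (\<tau> q) = b}
         = (if b then (\<tau> p + 1) div 2 else \<tau> p div 2)"
  using assms(2)
proof (induction p)
  case 0
  have "{q. q \<le> (0::nat) \<and> (q = 0 \<or> \<tau> q \<noteq> \<tau> (q-1)) \<and> odd (\<tau> q) = b} = (if b then {0} else {})"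
    using assms(1) by auto
  then show ?case using assms(1) by simp
next
  case (Suc p)
  let ?S = "\<lambda>p. {q. q \<le> p \<and> (q = 0 \<or> \<tau> q \<noteq> \<tau> (q-1)) \<and> odd (\<tau> q) = b}"
  have IH: "card (?S p) = (if b then (\<tau> p + 1) div 2 else \<tau> p div 2)"
    using Suc by auto
  have st: "\<tau> (Suc p) = \<tau> p \<or> \<tau> (Suc p) = Suc (\<tau> p)" using Suc.prems[of "Suc p"] by simp
  have fin: "finite (?S p)" by (rule finite_subset[of _ "{..p}"]) auto
  show ?case
  proof (cases "\<tau> (Suc p) = \<tau> p")
    case True
    then have "?S (Suc p) = ?S p" by (auto simp: le_Suc_eq)
    then show ?thesis using IH True by simp
  next
    case False
    then have tp: "\<tau> (Suc p) = Suc (\<tau> p)" using st by simp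
    show ?thesis
    proof (cases "odd (\<tau> (Suc p)) = b")
      case True
      then have "?S (Suc p) = insert (Suc p) (?S p)" using False by (auto simp: le_Suc_eq)
      then have c: "card (?S (Suc p)) = Suc (card (?S p))" using fin by simp
      have par: "odd (Suc (\<tau> p)) = b" using True tp by simp
      show ?thesis unfolding c IH tp using par ar1 ar2 by (cases b) auto
    next
      case F2: False
      then have c: "?S (Suc p) = ?S p" by (auto simp: le_Suc_eq)
      have par: "odd (Suc (\<tau> p)) \<noteq> b" using F2 tp by simp
      show ?thesis unfolding c IH tp using par ar3 ar4 by (cases b) auto
    qed
  qed
qed

context EW
begin

lemma finite_Lb: "finite (Lb s)"
  by (rule finite_subset[of _ "{0..n}"]) (auto simp: Lb_def)

definition blk :: "nat \<Rightarrow> nat list" where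
  "blk s = (if odd s then sorted_list_of_set (Lb s) else rev (sorted_list_of_set (Lb s)))"

lemma set_blk: "set (blk s) = Lb s"
  using finite_Lb by (simp add: blk_def)

lemma distinct_blk: "distinct (blk s)"
  by (simp add: blk_def)

lemma Psi_eq: "Psi n R T = concat (map blk [1..<2*n+1])"
proof -
  have "Psi n R T = concat (map (\<lambda>k. blk (2*k-1) @ blk (2*k)) [1..<n+1])"
    unfolding Psi_def V_blk_def U_blk_def canon_block_eq
    by (intro arg_cong[where f=concat] map_cong) (auto simp: blk_def)
  also have "\<dots> = concat (map blk [1..<2*n+1])" by (rule concat_pairs)
  finally show ?thesis .
qed

definition xs :: "nat \<Rightarrow> nat list" where "xs N = concat (map blk [1..<N+1])"

lemma xs_Suc: "xs (Suc N) = xs N @ blk (Suc N)"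
  by (simp add: xs_def)

lemma set_xs: "set (xs N) = {v. v \<le> n \<and> 1 \<le> t v \<and> t v \<le> N}"
proof (induction N)
  case 0 then show ?case by (auto simp: xs_def)
next
  case (Suc N)
  have "set (xs (Suc N)) = set (xs N) \<union> Lb (Suc N)" by (simp add: xs_Suc set_blk)
  also have "\<dots> = {v. v \<le> n \<and> 1 \<le> t v \<and> t v \<le> N} \<union> {v. v \<le> n \<and> t v = Suc N}"
    using Suc by (simp add: Lb_def)
  also have "\<dots> = {v. v \<le> n \<and> 1 \<le> t v \<and> t v \<le> Suc N}" by (auto simp: le_Suc_eq)
  finally show ?case .
qed

lemma distinct_xs: "distinct (xs N)"
proof (induction N)
  case 0 then show ?case by (simp add: xs_def)
next
  case (Suc N)
  have "set (xs N) \<inter> set (blk (Suc N)) = {}" by (auto simp: set_xs set_blk Lb_def)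
  then show ?case using Suc distinct_blk by (simp add: xs_Suc)
qed

lemma Lb_ne_down: "Lb s \<noteq> {} \<Longrightarrow> s' \<le> s \<Longrightarrow> Lb s' \<noteq> {}"
proof (induction s)
  case 0 then show ?case by simp
next
  case (Suc s)
  show ?case
  proof (cases "s' = Suc s")
    case True then show ?thesis using Suc by simp
  next
    case False then show ?thesis using Suc Lb_nonempty_prev by simp
  qed
qed

lemma pred_in_prev: "v \<in> Lb (Suc s) \<Longrightarrow> \<exists>u \<in> Lb s. edge u v"
proof -
  assume v: "v \<in> Lb (Suc s)"
  then have "v \<le> n" "t v = Suc s" by (auto simp: Lb_def)
  moreover then have "v \<noteq> 0" by (metis Zero_not_Suc t_0)
  ultimately obtain u where "edge u v" "t u = s" using pred_prev by fastforce
  then show ?thesis using edge_V by (auto simp: Lb_def)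
qed

lemma Lb_type: assumes "v \<in> Lb s" "s \<noteq> 0" shows "v \<le> n" "v \<noteq> 0" "v \<in> R \<longleftrightarrow> even s" "t v = s"
proof -
  show v: "v \<le> n" "t v = s" using assms by (auto simp: Lb_def)
  show "v \<noteq> 0" by (metis assms(2) t_0 v(2))
  then show "v \<in> R \<longleftrightarrow> even s" using parity v by auto
qed

lemma bound_odd: assumes "odd N" "a \<in> Lb N" "\<forall>x\<in>Lb N. x \<le> a" "b \<in> Lb (Suc N)" shows "b < a"
proof -
  obtain u where u: "u \<in> Lb N" "edge u b" using pred_in_prev assms by blast
  have "b \<in> R" using Lb_type[OF assms(4)] assms(1) by simp
  then have "fcell n R b u" using u edge_to_row by blast
  then have "b < u" by (simp add: fcell_def)
  then show ?thesis using assms u by fastforce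
qed

lemma bound_even: assumes "even N" "a \<in> Lb N" "\<forall>x\<in>Lb N. a \<le> x" "b \<in> Lb (Suc N)" shows "a < b"
proof -
  obtain u where u: "u \<in> Lb N" "edge u b" using pred_in_prev assms by blast
  have "b \<notin> R" using Lb_type[OF assms(4)] assms(1) by simp
  then have "fcell n R u b" using u edge_to_col by blast
  then have "u < b" by (simp add: fcell_def)
  then show ?thesis using assms u by fastforce
qed

definition PP :: "nat \<Rightarrow> nat \<Rightarrow> bool" where
  "PP u v \<longleftrightarrow> (t v = t u \<or> t v = Suc (t u)) \<and> (u < v \<longleftrightarrow> odd (t v))"

lemma succ_blk: "successively PP (blk s)"
proof (cases "s = 0")
  case True
  then show ?thesis using Lb_0 by (simp add: blk_def)
next
  case s0: False
  have sw: "sorted_wrt (<) (sorted_list_of_set (Lb s))" by (rule strict_sorted_list_of_set)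
  have tt: "\<And>x. x \<in> set (sorted_list_of_set (Lb s)) \<Longrightarrow> t x = s"
    using finite_Lb Lb_type(4)[OF _ s0] by simp
  show ?thesis
  proof (cases "odd s")
    case True
    have "successively PP (sorted_list_of_set (Lb s))"
      by (rule successively_mono[OF successively_if_sorted_wrt[OF sw]]) (use tt True in \<open>auto simp: PP_def\<close>)
    then show ?thesis using True by (simp add: blk_def)
  next
    case False
    have "successively (\<lambda>x y. PP y x) (sorted_list_of_set (Lb s))"
      by (rule successively_mono[OF successively_if_sorted_wrt[OF sw]]) (use tt False in \<open>auto simp: PP_def\<close>)
    then show ?thesis using False by (simp add: blk_def)
  qed
qed

lemma blk_ne: "blk s \<noteq> [] \<longleftrightarrow> Lb s \<noteq> {}"
  using set_blk by (metis set_empty)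

lemma last_xs: "N \<noteq> 0 \<Longrightarrow> Lb N \<noteq> {} \<Longrightarrow> last (xs N) = last (blk N)"
  by (cases N) (auto simp: xs_Suc blk_ne)

lemma succ_xs: "successively PP (xs N)"
proof (induction N)
  case 0 then show ?case by (simp add: xs_def)
next
  case (Suc N)
  have "PP (last (xs N)) (hd (blk (Suc N)))" if ne: "blk (Suc N) \<noteq> []" and N0: "N \<noteq> 0"
  proof -
    have L1: "Lb (Suc N) \<noteq> {}" using ne blk_ne by blast
    then have L0: "Lb N \<noteq> {}" using Lb_nonempty_prev by blast
    have lx: "last (xs N) = last (blk N)" using last_xs[OF N0 L0] .
    let ?A = "sorted_list_of_set (Lb N)" and ?B = "sorted_list_of_set (Lb (Suc N))"
    have Ane: "?A \<noteq> []" and Bne: "?B \<noteq> []" using L0 L1 finite_Lb by auto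
    have sA: "sorted ?A" "sorted ?B" by simp_all
    have setA: "set ?A = Lb N" "set ?B = Lb (Suc N)" using finite_Lb by auto
    show ?thesis
    proof (cases "odd N")
      case True
      have a: "last (blk N) = last ?A" "hd (blk (Suc N)) = last ?B" using True by (auto simp: blk_def hd_rev)
      have ain: "last ?A \<in> Lb N" using Ane setA by (metis last_in_set)
      have bin: "last ?B \<in> Lb (Suc N)" using Bne setA by (metis last_in_set)
      have amax: "\<forall>x\<in>Lb N. x \<le> last ?A" using sorted_hd_last[OF sA(1)] setA by blast
      have "last ?B < last ?A" by (rule bound_odd[OF True ain amax bin])
      moreover have "t (last ?A) = N" "t (last ?B) = Suc N" using ain bin N0 Lb_type(4) by auto
      ultimately show ?thesis using lx a True by (simp add: PP_def)
    next
      case False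
      have a: "last (blk N) = hd ?A" "hd (blk (Suc N)) = hd ?B" using False by (auto simp: blk_def last_rev)
      have ain: "hd ?A \<in> Lb N" using Ane setA by (metis hd_in_set)
      have bin: "hd ?B \<in> Lb (Suc N)" using Bne setA by (metis hd_in_set)
      have amin: "\<forall>x\<in>Lb N. hd ?A \<le> x" using sorted_hd_last[OF sA(1)] setA by blast
      have "hd ?A < hd ?B" using bound_even False ain amin bin by blast
      moreover have "t (hd ?A) = N" "t (hd ?B) = Suc N" using ain bin N0 Lb_type(4) by auto
      ultimately show ?thesis using lx a False by (simp add: PP_def)
    qed
  qed
  moreover have "xs 0 = []" by (simp add: xs_def)
  ultimately show ?case using Suc succ_blk[of "Suc N"] unfolding xs_Suc successively_append_iff
    by (cases "N = 0") auto
qed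

lemma xs_start: "N \<noteq> 0 \<Longrightarrow> \<exists>r. xs N = blk 1 @ r"
proof (induction N)
  case 0 then show ?case by simp
next
  case (Suc N)
  show ?case
  proof (cases "N = 0")
    case True then show ?thesis by (intro exI[of _ "[]"]) (simp add: xs_def)
  next
    case False
    then obtain r where "xs N = blk 1 @ r" using Suc.IH by blast
    then show ?thesis by (simp add: xs_Suc)
  qed
qed

definition \<pi> :: "nat list" where "\<pi> = xs (2*n)"

lemma Psi_pi: "Psi n R T = \<pi>"
  by (simp add: Psi_eq \<pi>_def xs_def)

lemma n_pos: "n \<noteq> 0"
  by (metis zero_R n_notR)

lemma set_pi: "set \<pi> = {1..n}"
proof -
  have "\<And>v. v \<le> n \<Longrightarrow> 1 \<le> t v \<longleftrightarrow> v \<noteq> 0" using t_eq0 by fastforce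
  then show ?thesis unfolding \<pi>_def set_xs using t_bound by fastforce
qed

lemma distinct_pi: "distinct \<pi>"
  by (simp add: \<pi>_def distinct_xs)

lemma is_perm_pi: "is_perm n \<pi>"
  by (simp add: is_perm_def set_pi distinct_pi)

lemma Lb1_ne: "Lb 1 \<noteq> {}"
proof -
  have "n \<in> Lb (t n)" by (simp add: Lb_def)
  moreover have "1 \<le> t n" using t_pos n_pos by (simp add: Suc_le_eq)
  ultimately show ?thesis using Lb_ne_down by blast
qed

lemma t_hd: "t (\<pi> ! 0) = 1"
proof -
  obtain r where r: "\<pi> = blk 1 @ r" using xs_start[of "2*n"] n_pos by (auto simp: \<pi>_def)
  have "blk 1 \<noteq> []" using Lb1_ne blk_ne by blast
  then have "\<pi> ! 0 = blk 1 ! 0" "blk 1 ! 0 \<in> set (blk 1)" using r by (auto simp: nth_append)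
  then show ?thesis using set_blk Lb_type(4)[of _ 1] by auto
qed

lemma pi_step: "Suc q < length \<pi> \<Longrightarrow> PP (\<pi> ! q) (\<pi> ! Suc q)"
  using successively_nth[OF succ_xs] by (simp add: \<pi>_def)

lemma asc_pi: "q < length \<pi> \<Longrightarrow> asc_top \<pi> q \<longleftrightarrow> odd (t (\<pi> ! q))"
proof (cases q)
  case 0 then show ?thesis using t_hd by (simp add: asc_top_def)
next
  case (Suc q')
  assume "q < length \<pi>"
  then show ?thesis using pi_step[of q'] Suc by (simp add: asc_top_def PP_def)
qed

lemma run_index_pi: assumes "p < length \<pi>" shows "run_index \<pi> p = (t (\<pi> ! p) + 1) div 2"
proof -
  let ?\<tau> = "\<lambda>q. t (\<pi> ! q)"
  have st: "\<And>q. 0 < q \<Longrightarrow> q \<le> p \<Longrightarrow> ?\<tau> q = ?\<tau> (q-1) \<or> ?\<tau> q = Suc (?\<tau> (q-1))"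
  proof -
    fix q :: nat assume "0 < q" "q \<le> p"
    then obtain q' where "q = Suc q'" "Suc q' < length \<pi>" using assms by (cases q) auto
    then show "?\<tau> q = ?\<tau> (q-1) \<or> ?\<tau> q = Suc (?\<tau> (q-1))" using pi_step[of q'] by (simp add: PP_def)
  qed
  have "{q. q \<le> p \<and> run_start \<pi> q \<and> asc_top \<pi> q = asc_top \<pi> p}
      = {q. q \<le> p \<and> (q = 0 \<or> ?\<tau> q \<noteq> ?\<tau> (q-1)) \<and> odd (?\<tau> q) = odd (?\<tau> p)}"
  proof (intro Collect_cong conj_cong refl)
    fix q assume q: "q \<le> p"
    have ql: "q < length \<pi>" using q assms by simp
    show "run_start \<pi> q \<longleftrightarrow> (q = 0 \<or> ?\<tau> q \<noteq> ?\<tau> (q-1))"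
    proof (cases q)
      case 0 then show ?thesis by (simp add: run_start_def)
    next
      case (Suc q')
      have "asc_top \<pi> q \<longleftrightarrow> odd (?\<tau> q)" "asc_top \<pi> (q-1) \<longleftrightarrow> odd (?\<tau> (q-1))"
        using asc_pi ql by auto
      moreover have "?\<tau> q = ?\<tau> (q-1) \<or> ?\<tau> q = Suc (?\<tau> (q-1))" using st[of q] q Suc by simp
      ultimately show ?thesis unfolding run_start_def using Suc by auto
    qed
    show "(asc_top \<pi> q = asc_top \<pi> p) \<longleftrightarrow> (odd (?\<tau> q) = odd (?\<tau> p))"
      using asc_pi ql assms by simp
  qed
  moreover have "card {q. q \<le> p \<and> (q = 0 \<or> ?\<tau> q \<noteq> ?\<tau> (q-1)) \<and> odd (?\<tau> q) = odd (?\<tau> p)}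
      = (if odd (?\<tau> p) then (?\<tau> p + 1) div 2 else ?\<tau> p div 2)"
    by (rule count_runs) (use t_hd st in auto)
  ultimately show ?thesis unfolding run_index_def by auto
qed

lemma A_run_pi: "A_run \<pi> l = {v. 1 \<le> v \<and> v \<le> n \<and> odd (t v) \<and> (t v + 1) div 2 = l}"
proof -
  have "A_run \<pi> l = {v \<in> set \<pi>. odd (t v) \<and> (t v + 1) div 2 = l}"
    unfolding A_run_def using asc_pi run_index_pi by (auto simp: in_set_conv_nth)
  then show ?thesis using set_pi by auto
qed

lemma D_run_pi: "l \<noteq> 0 \<Longrightarrow> D_run \<pi> l = {v. 1 \<le> v \<and> v \<le> n \<and> even (t v) \<and> (t v + 1) div 2 = l}"
proof -
  assume l: "l \<noteq> 0"
  have "D_run \<pi> l = {v \<in> set \<pi>. even (t v) \<and> (t v + 1) div 2 = l}"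
    unfolding D_run_def using l asc_pi run_index_pi by (auto simp: in_set_conv_nth)
  then show ?thesis using set_pi by auto
qed


lemma ar5: "odd x \<Longrightarrow> even y \<Longrightarrow> (x + 1) div 2 \<le> (y + 1) div 2 \<longleftrightarrow> x < y" for x y :: nat
  by presburger
lemma ar6: "even x \<Longrightarrow> odd y \<Longrightarrow> (x + 1) div 2 < (y + 1) div 2 \<longleftrightarrow> x < y" for x y :: nat
  by presburger

lemma ar7: "odd x \<Longrightarrow> 0 < (x + 1) div 2" for x :: nat by presburger

lemma row_bound: assumes i: "i \<in> R" "i \<noteq> 0" "i \<le> n"
  shows "card {j. \<exists>k \<le> (t i + 1) div 2. j \<in> A_run \<pi> k \<and> j > i} = row_zeros n R T i"
proof -
  have ti: "even (t i)" using parity[OF i(3) i(2)] i(1) by simp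
  have "{j. \<exists>k \<le> (t i + 1) div 2. j \<in> A_run \<pi> k \<and> j > i} = {j. fcell n R i j \<and> \<not> T i j}"
  proof (intro set_eqI iffI)
    fix j assume "j \<in> {j. \<exists>k \<le> (t i + 1) div 2. j \<in> A_run \<pi> k \<and> j > i}"
    then obtain k where k: "k \<le> (t i + 1) div 2" "1 \<le> j" "j \<le> n" "odd (t j)" "(t j + 1) div 2 = k" "i < j"
      unfolding A_run_pi by auto
    have jR: "j \<notin> R" using parity[of j] k by auto
    have lt: "t j < t i" using ar5[of "t j" "t i"] k ti by simp
    have fc: "fcell n R i j" using i k jR by (simp add: fcell_iff)
    have "\<not> T i j"
    proof
      assume "T i j"
      then have "edge i j" using fc jR edge_to_col by blast
      then show False using edge_t lt by fastforce
    qed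
    then show "j \<in> {j. fcell n R i j \<and> \<not> T i j}" using fc by simp
  next
    fix j assume "j \<in> {j. fcell n R i j \<and> \<not> T i j}"
    then have fc: "fcell n R i j" "\<not> T i j" by auto
    then have e: "edge j i" using edge_to_row i(1) by blast
    have lt: "t j < t i" using edge_t[OF e] .
    have j: "j \<le> n" "j \<notin> R" "i < j" using fc by (auto simp: fcell_iff)
    have j0: "j \<noteq> 0" using j by auto
    have oj: "odd (t j)" using parity[OF j(1) j0] j by simp
    have "(t j + 1) div 2 \<le> (t i + 1) div 2" using ar5[of "t j" "t i"] oj ti lt by simp
    moreover have "j \<in> A_run \<pi> ((t j + 1) div 2)" unfolding A_run_pi using j j0 oj by auto
    ultimately show "j \<in> {j. \<exists>k \<le> (t i + 1) div 2. j \<in> A_run \<pi> k \<and> j > i}" using j by blast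
  qed
  then show ?thesis by (simp add: row_zeros_def)
qed

lemma col_bound: assumes i: "i \<notin> R" "i \<noteq> 0" "i \<le> n"
  shows "card {j. \<exists>k < (t i + 1) div 2. j \<in> D_run \<pi> k \<and> j < i} = col_ones n R T i"
proof -
  have ti: "odd (t i)" using parity[OF i(3) i(2)] i(1) by simp
  have l1: "0 < (t i + 1) div 2" using ar7[OF ti] .
  have "{j. \<exists>k < (t i + 1) div 2. j \<in> D_run \<pi> k \<and> j < i} = {j. fcell n R j i \<and> T j i}"
  proof (intro set_eqI iffI)
    fix j assume "j \<in> {j. \<exists>k < (t i + 1) div 2. j \<in> D_run \<pi> k \<and> j < i}"
    then obtain k where k: "k < (t i + 1) div 2" "j \<in> D_run \<pi> k" "j < i" by auto
    show "j \<in> {j. fcell n R j i \<and> T j i}"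
    proof (cases "k = 0")
      case True
      then have "j = 0" using k by (simp add: D_run_def)
      then have "fcell n R j i" using i zero_R by (auto simp: fcell_iff)
      then show ?thesis using T_top \<open>j = 0\<close> by simp
    next
      case False
      then have kk: "1 \<le> j" "j \<le> n" "even (t j)" "(t j + 1) div 2 = k"
        using k D_run_pi by auto
      have jR: "j \<in> R" using parity[of j] kk by auto
      have lt: "t j < t i" using ar6[of "t j" "t i"] k kk ti by simp
      have fc: "fcell n R j i" using i k jR by (simp add: fcell_iff)
      have "T j i"
      proof (rule ccontr)
        assume "\<not> T j i"
        then have "edge i j" using fc jR edge_to_row by blast
        then show False using edge_t lt by fastforce
      qed
      then show ?thesis using fc by simp
    qed
  next
    fix j assume "j \<in> {j. fcell n R j i \<and> T j i}"
    then have fc: "fcell n R j i" "T j i" by auto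
    then have e: "edge j i" using edge_to_col i(1) by blast
    have lt: "t j < t i" using edge_t[OF e] .
    have j: "j \<le> n" "j \<in> R" "j < i" using fc R_sub by (auto simp: fcell_iff)
    show "j \<in> {j. \<exists>k < (t i + 1) div 2. j \<in> D_run \<pi> k \<and> j < i}"
    proof (cases "j = 0")
      case True
      then have "j \<in> D_run \<pi> 0" by (simp add: D_run_def)
      then show ?thesis using l1 j by blast
    next
      case j0: False
      have ej: "even (t j)" using parity[OF j(1) j0] j by simp
      have tj: "0 < t j" using t_pos j0 j by simp
      then have k0: "(t j + 1) div 2 \<noteq> 0" by presburger
      have "(t j + 1) div 2 < (t i + 1) div 2" using ar6[of "t j" "t i"] ej ti lt by simp
      moreover have "j \<in> D_run \<pi> ((t j + 1) div 2)" unfolding D_run_pi[OF k0] using j j0 ej by auto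
      ultimately show ?thesis using j by blast
    qed
  qed
  then show ?thesis by (simp add: col_ones_def)
qed

lemma memb_row: assumes "i \<in> R" "i \<noteq> 0" "i \<le> n"
  shows "i \<in> D_run \<pi> l \<longleftrightarrow> l = (t i + 1) div 2" "i \<notin> A_run \<pi> l"
proof -
  have ti: "even (t i)" using parity[OF assms(3) assms(2)] assms(1) by simp
  have "0 < t i" using t_pos assms by simp
  then have k0: "(t i + 1) div 2 \<noteq> 0" by presburger
  show "i \<in> D_run \<pi> l \<longleftrightarrow> l = (t i + 1) div 2"
  proof (cases "l = 0")
    case True then show ?thesis using k0 assms by (simp add: D_run_def)
  next
    case False then show ?thesis using D_run_pi[OF False] assms ti by auto
  qed
  show "i \<notin> A_run \<pi> l" using A_run_pi ti by simp
qed

lemma memb_col: assumes "i \<notin> R" "i \<noteq> 0" "i \<le> n"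
  shows "i \<in> A_run \<pi> l \<longleftrightarrow> l = (t i + 1) div 2" "i \<notin> D_run \<pi> l"
proof -
  have ti: "odd (t i)" using parity[OF assms(3) assms(2)] assms(1) by simp
  show "i \<in> A_run \<pi> l \<longleftrightarrow> l = (t i + 1) div 2" using A_run_pi assms ti by auto
  show "i \<notin> D_run \<pi> l"
  proof (cases "l = 0")
    case True then show ?thesis using assms by (simp add: D_run_def)
  next
    case False then show ?thesis using D_run_pi[OF False] ti by simp
  qed
qed

lemma per_i: assumes "i \<in> {1..n}"
  shows "(\<forall>l. (i \<in> D_run \<pi> l \<longrightarrow>
           0 \<le> a i \<and> a i < int (card {j. \<exists>k \<le> l. j \<in> A_run \<pi> k \<and> j > i})) \<and>
        (i \<in> A_run \<pi> l \<longrightarrow>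
           0 \<le> a i \<and> a i < int (card {j. \<exists>k < l. j \<in> D_run \<pi> k \<and> j < i})))
    \<longleftrightarrow> (if i \<in> R then 0 \<le> a i \<and> a i < int (row_zeros n R T i)
         else 0 \<le> a i \<and> a i < int (col_ones n R T i))"
proof -
  have i: "i \<noteq> 0" "i \<le> n" using assms by auto
  show ?thesis
  proof (cases "i \<in> R")
    case True
    then show ?thesis using memb_row[OF True i] row_bound[OF True i] by auto
  next
    case False
    then show ?thesis using memb_col[OF False i] col_bound[OF False i] by auto
  qed
qed

lemma main_perm: "decorated_perm n \<pi> a \<longleftrightarrow> (\<forall>i\<in>{1..n}. (if i \<in> R then 0 \<le> a i \<and> a i < int (row_zeros n R T i)
         else 0 \<le> a i \<and> a i < int (col_ones n R T i)))"
proof -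
  have e: "(\<forall>i\<in>{1..n}. \<forall>l. (i \<in> D_run \<pi> l \<longrightarrow>
           0 \<le> a i \<and> a i < int (card {j. \<exists>k \<le> l. j \<in> A_run \<pi> k \<and> j > i})) \<and>
        (i \<in> A_run \<pi> l \<longrightarrow>
           0 \<le> a i \<and> a i < int (card {j. \<exists>k < l. j \<in> D_run \<pi> k \<and> j < i})))
    \<longleftrightarrow> (\<forall>i\<in>{1..n}. (if i \<in> R then 0 \<le> a i \<and> a i < int (row_zeros n R T i)
         else 0 \<le> a i \<and> a i < int (col_ones n R T i)))"
    by (rule ball_cong[OF refl per_i])
  show ?thesis unfolding decorated_perm_def using is_perm_pi e by blast
qed

lemma main_EW: "decorated_EW n R T a \<longleftrightarrow> (\<forall>i\<in>{1..n}. (if i \<in> R then 0 \<le> a i \<and> a i < int (row_zeros n R T i)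
         else 0 \<le> a i \<and> a i < int (col_ones n R T i)))"
proof -
  have r1: "\<And>i. i \<in> R - {0} \<Longrightarrow> i \<in> {1..n} \<and> i \<in> R" using R_sub by auto
  have r2: "i \<in> {1..n} \<and> i \<notin> R" if a: "i \<in> fcols n R" for i
  proof -
    have "i \<le> n" "i \<notin> R" using a by (auto simp: fcols_def)
    moreover then have "i \<noteq> 0" using zero_R by metis
    ultimately show ?thesis by simp
  qed
  have r3: "\<And>i. i \<in> {1..n} \<Longrightarrow> i \<notin> R \<Longrightarrow> i \<in> fcols n R" by (auto simp: fcols_def)
  have r4: "\<And>i. i \<in> {1..n} \<Longrightarrow> i \<in> R \<Longrightarrow> i \<in> R - {0}" by auto
  let ?A = "\<lambda>i. 0 \<le> a i \<and> a i < int (row_zeros n R T i)"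
  let ?B = "\<lambda>i. 0 \<le> a i \<and> a i < int (col_ones n R T i)"
  have "(\<forall>i\<in>R - {0}. ?A i) \<and> (\<forall>j\<in>fcols n R. ?B j) \<longleftrightarrow> (\<forall>i\<in>{1..n}. if i \<in> R then ?A i else ?B i)"
  proof
    assume h: "(\<forall>i\<in>R - {0}. ?A i) \<and> (\<forall>j\<in>fcols n R. ?B j)"
    show "\<forall>i\<in>{1..n}. if i \<in> R then ?A i else ?B i"
    proof
      fix i assume i: "i \<in> {1..n}"
      show "if i \<in> R then ?A i else ?B i"
      proof (cases "i \<in> R")
        case True then show ?thesis using h r4[OF i] by simp
      next
        case False then show ?thesis using h r3[OF i] by simp
      qed
    qed
  next
    assume h: "\<forall>i\<in>{1..n}. if i \<in> R then ?A i else ?B i"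
    have "\<forall>i\<in>R - {0}. ?A i"
    proof
      fix i assume i: "i \<in> R - {0}"
      have "if i \<in> R then ?A i else ?B i" using h r1[OF i] by blast
      then show "?A i" using r1[OF i] by simp
    qed
    moreover have "\<forall>j\<in>fcols n R. ?B j"
    proof
      fix i assume i: "i \<in> fcols n R"
      have "if i \<in> R then ?A i else ?B i" using h r2[OF i] by blast
      then show "?B i" using r2[OF i] by simp
    qed
    ultimately show "(\<forall>i\<in>R - {0}. ?A i) \<and> (\<forall>j\<in>fcols n R. ?B j)" by blast
  qed
  then show ?thesis unfolding decorated_EW_def using ew by blast
qed

lemma main: "decorated_EW n R T a \<longleftrightarrow> decorated_perm n \<pi> a"
  using main_EW main_perm by blast

end

theorem lemma5p2:
  fixes n :: nat and R :: "nat set" and T :: "nat \<Rightarrow> nat \<Rightarrow> bool" and a :: "nat \<Rightarrow> int"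
  assumes "ferrers n R"
    and "T \<in> EWtab n R"
  shows "decorated_EW n R T a \<longleftrightarrow> decorated_perm n (Psi n R T) a"
proof -
  interpret EW n R T using assms by unfold_locales
  show ?thesis using main Psi_pi by simp
qed

end
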